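(* If (A1), (A3) and (A4) hold, then there exists $\varepsilon>0$ such that $|1-FR(\lambda,A)B|>\varepsilon$ for all $\lambda\in\rho(A)$ with $\mathrm{Re}\,\lambda\ge0$.
   Context: $X$ is a complex Hilbert space; $A$ is a Riesz-spectral operator (simple distinct eigenvalues $(\lambda_n)$ with finitely many accumulation points, Riesz basis of eigenvectors $(\phi_n)$, biorthogonal eigenvectors $(\psi_n)$ of $A^*$, $Ax=\sum_n\lambda_n\langle x,\psi_n\rangle\phi_n$). $\mathcal D^{\beta}=\{x:\sum_n|\lambda_n|^{2\beta}|\langle x,\psi_n\rangle|^2<\infty\}$, $\mathcal D^{\gamma}_*=\{x:\sum_n|\lambda_n|^{2\gamma}|\langle x,\phi_n\rangle|^2<\infty\}$, $\Omega_{\alpha,\Upsilon}=\{\lambda\in\mathbb C\setminus\mathbb R:\mathrm{Re}\,\lambda\le-\Upsilon/|\mathrm{Im}\,\lambda|^\alpha\}$. $b,f\in X$, $Bu=bu$, $Fx=\langle x,f\rangle$. Polynomially stable with parameter $\alpha$: uniformly bounded, $i\mathbb R$ in the resolvent set of the generator $G$, $\|T(t)G^{-1}\|=O(t^{-1/\alpha})$. (A1): there exist $\omega,\alpha,\Upsilon>0$ such that only finitely many $\lambda_n$ lie in $\{\mathrm{Re}\,\lambda>-\omega\}\cap(\mathbb C\setminus\Omega_{\alpha,\Upsilon})$; (A3): $A+BF$ generates a polynomially stable $C_0$-semigroup with parameter $\alpha$; (A4): there are $\beta,\gamma\ge0$ with $b\in\mathcal D^\beta$, $f\in\mathcal D^\gamma_*$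 and either ($\beta,\gamma\in\mathbb N\cup\{0\}$, $\beta+\gamma\ge\alpha$) or $\beta+\gamma>\alpha$. *)

theory Defs
  imports "HOL-Analysis.Analysis"
begin

(* A complex Hilbert space: a real Banach space 'a together with a complex
   scalar multiplication sc extending the real one and an inner product ip
   (linear in the first, conjugate-linear in the second argument) inducing
   the norm of 'a. *)
definition complex_hilbert :: "(complex \<Rightarrow> 'a::banach \<Rightarrow> 'a) \<Rightarrow> ('a \<Rightarrow> 'a \<Rightarrow> complex) \<Rightarrow> bool" where
  "complex_hilbert sc ip \<longleftrightarrow>
     (\<forall>r x. sc (complex_of_real r) x = r *\<^sub>R x) \<and>
     (\<forall>a b x. sc (a * b) x = sc a (sc b x)) \<and>
     (\<forall>a x y. sc a (x + y) = sc a x + sc a y) \<and>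
     (\<forall>a b x. sc (a + b) x = sc a x + sc b x) \<and>
     (\<forall>x y z. ip (x + y) z = ip x z + ip y z) \<and>
     (\<forall>a x y. ip (sc a x) y = a * ip x y) \<and>
     (\<forall>x y. ip y x = cnj (ip x y)) \<and>
     (\<forall>x. ip x x = complex_of_real ((norm x)\<^sup>2))"

definition riesz_basis :: "(complex \<Rightarrow> 'a::banach \<Rightarrow> 'a) \<Rightarrow> (nat \<Rightarrow> 'a) \<Rightarrow> bool" where
  "riesz_basis sc phi \<longleftrightarrow>
     closure {(\<Sum>n<N. sc (c n) (phi n)) | N c. True} = UNIV \<and>
     (\<exists>m M. 0 < m \<and> 0 < M \<and>
        (\<forall>N c. m * (\<Sum>n<N. (cmod (c n))\<^sup>2) \<le> (norm (\<Sum>n<N. sc (c n) (phi n)))\<^sup>2 \<and>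
               (norm (\<Sum>n<N. sc (c n) (phi n)))\<^sup>2 \<le> M * (\<Sum>n<N. (cmod (c n))\<^sup>2)))"

definition riesz_spectral_data ::
  "(complex \<Rightarrow> 'a::banach \<Rightarrow> 'a) \<Rightarrow> ('a \<Rightarrow> 'a \<Rightarrow> complex) \<Rightarrow> (nat \<Rightarrow> complex) \<Rightarrow> (nat \<Rightarrow> 'a) \<Rightarrow> (nat \<Rightarrow> 'a) \<Rightarrow> bool" where
  "riesz_spectral_data sc ip lam phi psi \<longleftrightarrow>
     inj lam \<and> finite {z. z islimpt range lam} \<and> riesz_basis sc phi \<and>
     (\<forall>n m. ip (phi n) (psi m) = (if n = m then 1 else 0))"

definition rs_dom :: "('a \<Rightarrow> 'a \<Rightarrow> complex) \<Rightarrow> (nat \<Rightarrow> complex) \<Rightarrow> (nat \<Rightarrow> 'a) \<Rightarrow> 'a set" where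
  "rs_dom ip lam psi = {x. summable (\<lambda>n. (cmod (lam n))\<^sup>2 * (cmod (ip x (psi n)))\<^sup>2)}"

definition rs_op :: "(complex \<Rightarrow> 'a::banach \<Rightarrow> 'a) \<Rightarrow> ('a \<Rightarrow> 'a \<Rightarrow> complex) \<Rightarrow> (nat \<Rightarrow> complex) \<Rightarrow> (nat \<Rightarrow> 'a) \<Rightarrow> (nat \<Rightarrow> 'a) \<Rightarrow> 'a \<Rightarrow> 'a" where
  "rs_op sc ip lam phi psi x = (\<Sum>n. sc (lam n * ip x (psi n)) (phi n))"

definition Dpow :: "('a \<Rightarrow> 'a \<Rightarrow> complex) \<Rightarrow> (nat \<Rightarrow> complex) \<Rightarrow> (nat \<Rightarrow> 'a) \<Rightarrow> real \<Rightarrow> 'a set" where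
  "Dpow ip lam psi \<beta> = {x. summable (\<lambda>n. (cmod (lam n)) powr (2 * \<beta>) * (cmod (ip x (psi n)))\<^sup>2)}"

definition Omega :: "real \<Rightarrow> real \<Rightarrow> complex set" where
  "Omega \<alpha> \<Upsilon> = {z. Im z \<noteq> 0 \<and> Re z \<le> - \<Upsilon> / (\<bar>Im z\<bar> powr \<alpha>)}"

definition resolvent_set :: "(complex \<Rightarrow> 'a::banach \<Rightarrow> 'a) \<Rightarrow> 'a set \<Rightarrow> ('a \<Rightarrow> 'a) \<Rightarrow> complex set" where
  "resolvent_set sc D A = {z. (\<forall>y. \<exists>!x. x \<in> D \<and> sc z x - A x = y) \<and>
                            (\<exists>C. \<forall>x\<in>D. norm x \<le> C * norm (sc z x - A x))}"

definition resolvent :: "(complex \<Rightarrow> 'a::banach \<Rightarrow> 'a) \<Rightarrow> 'a set \<Rightarrow> ('a \<Rightarrow> 'a) \<Rightarrow> complex \<Rightarrow> 'a \<Rightarrow> 'a" where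
  "resolvent sc D A z y = (THE x. x \<in> D \<and> sc z x - A x = y)"

definition C0_semigroup :: "(complex \<Rightarrow> 'a::banach \<Rightarrow> 'a) \<Rightarrow> (real \<Rightarrow> 'a \<Rightarrow> 'a) \<Rightarrow> bool" where
  "C0_semigroup sc T \<longleftrightarrow>
     (\<forall>t\<ge>0. bounded_linear (T t) \<and> (\<forall>c x. T t (sc c x) = sc c (T t x))) \<and>
     T 0 = id \<and>
     (\<forall>t s. 0 \<le> t \<longrightarrow> 0 \<le> s \<longrightarrow> T (t + s) = T t \<circ> T s) \<and>
     (\<forall>x. ((\<lambda>t. T t x) \<longlongrightarrow> x) (at_right 0))"

definition gen_dom :: "(real \<Rightarrow> 'a::real_normed_vector \<Rightarrow> 'a) \<Rightarrow> 'a set" where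
  "gen_dom T = {x. \<exists>y. ((\<lambda>h. (1 / h) *\<^sub>R (T h x - x)) \<longlongrightarrow> y) (at_right 0)}"

definition gen :: "(real \<Rightarrow> 'a::real_normed_vector \<Rightarrow> 'a) \<Rightarrow> 'a \<Rightarrow> 'a" where
  "gen T x = Lim (at_right 0) (\<lambda>h. (1 / h) *\<^sub>R (T h x - x))"

definition generates :: "(complex \<Rightarrow> 'a::banach \<Rightarrow> 'a) \<Rightarrow> 'a set \<Rightarrow> ('a \<Rightarrow> 'a) \<Rightarrow> (real \<Rightarrow> 'a \<Rightarrow> 'a) \<Rightarrow> bool" where
  "generates sc D A T \<longleftrightarrow> C0_semigroup sc T \<and> gen_dom T = D \<and> (\<forall>x\<in>D. gen T x = A x)"

definition poly_stable :: "(complex \<Rightarrow> 'a::banach \<Rightarrow> 'a) \<Rightarrow> real \<Rightarrow> (real \<Rightarrow> 'a \<Rightarrow> 'a) \<Rightarrow> bool" where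
  "poly_stable sc \<alpha> T \<longleftrightarrow>
     (\<exists>M. \<forall>t\<ge>0. \<forall>x. norm (T t x) \<le> M * norm x) \<and>
     (\<forall>s::real. \<i> * complex_of_real s \<in> resolvent_set sc (gen_dom T) (gen T)) \<and>
     (\<exists>C t0. \<forall>t\<ge>t0. \<forall>y.
        norm (T t (THE x. x \<in> gen_dom T \<and> gen T x = y)) \<le> C * t powr (- 1 / \<alpha>) * norm y)"

end

theory Submission
  imports Defs
begin


locale chs =
  fixes sc :: "complex \<Rightarrow> 'a::banach \<Rightarrow> 'a" and ip :: "'a \<Rightarrow> 'a \<Rightarrow> complex"
  assumes CH: "complex_hilbert sc ip"
begin

lemma sc_real: "sc (complex_of_real r) x = r *\<^sub>R x"
  and sc_mult: "sc (a * b) x = sc a (sc b x)"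
  and sc_add_right: "sc a (x + y) = sc a x + sc a y"
  and sc_add_left: "sc (a + b) x = sc a x + sc b x"
  and ip_add_left: "ip (x + y) z = ip x z + ip y z"
  and ip_sc_left: "ip (sc a x) y = a * ip x y"
  and ip_sym: "ip y x = cnj (ip x y)"
  and ip_self: "ip x x = complex_of_real ((norm x)\<^sup>2)"
  using CH unfolding complex_hilbert_def by blast+

lemma sc_0[simp]: "sc 0 x = 0" using sc_real[of 0 x] by simp
lemma sc_1[simp]: "sc 1 x = x" using sc_real[of 1 x] by simp
lemma sc_zero[simp]: "sc a 0 = 0" using sc_add_right[of a 0 0] by simp
lemma sc_minus_right: "sc a (- x) = - sc a x"
  using minus_unique[of "sc a x" "sc a (-x)"] sc_add_right[of a x "-x"] by simp
lemma sc_diff_right: "sc a (x - y) = sc a x - sc a y"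
  using sc_add_right[of a x "-y"] sc_minus_right by simp
lemma sc_minus_left: "sc (- a) x = - sc a x"
  using minus_unique[of "sc a x" "sc (-a) x"] sc_add_left[of a "-a" x] by simp
lemma sc_diff_left: "sc (a - b) x = sc a x - sc b x"
  using sc_add_left[of a "-b" x] sc_minus_left by simp
lemma sc_scaleR: "sc a (r *\<^sub>R x) = r *\<^sub>R sc a x"
  by (metis mult.commute sc_mult sc_real)
lemma sc_sum_right: "sc a (sum f S) = (\<Sum>i\<in>S. sc a (f i))"
  by (induction S rule: infinite_finite_induct) (auto simp: sc_add_right)
lemma sc_sum_left: "sc (sum f S) x = (\<Sum>i\<in>S. sc (f i) x)"
  by (induction S rule: infinite_finite_induct) (auto simp: sc_add_left)

lemma ip_zero_left[simp]: "ip 0 y = 0" using ip_add_left[of 0 0 y] by simp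
lemma ip_zero_right[simp]: "ip y 0 = 0" using ip_sym[of 0 y] by simp
lemma ip_minus_left: "ip (- x) y = - ip x y"
  using minus_unique[of "ip x y" "ip (-x) y"] ip_add_left[of x "-x" y] by simp
lemma ip_diff_left: "ip (x - y) z = ip x z - ip y z"
  using ip_add_left[of x "-y" z] ip_minus_left by simp
lemma ip_add_right: "ip x (y + z) = ip x y + ip x z"
  using ip_sym[of x "y+z"] ip_sym[of x y] ip_sym[of x z] ip_add_left[of y z x] by simp
lemma ip_sc_right: "ip x (sc a y) = cnj a * ip x y"
  using ip_sym[of x "sc a y"] ip_sym[of x y] ip_sc_left[of a y x] by simp
lemma ip_minus_right: "ip x (- y) = - ip x y"
  using minus_unique[of "ip x y" "ip x (-y)"] ip_add_right[of x y "-y"] by simp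
lemma ip_diff_right: "ip x (y - z) = ip x y - ip x z"
  using ip_add_right[of x y "-z"] ip_minus_right by simp
lemma ip_scaleR_left: "ip (r *\<^sub>R x) y = of_real r * ip x y"
  using ip_sc_left[of "of_real r" x y] sc_real by simp
lemma ip_scaleR_right: "ip x (r *\<^sub>R y) = of_real r * ip x y"
  using ip_sc_right[of x "of_real r" y] sc_real by simp
lemma ip_sum_left: "ip (sum f S) y = (\<Sum>i\<in>S. ip (f i) y)"
  by (induction S rule: infinite_finite_induct) (auto simp: ip_add_left)
lemma ip_sum_right: "ip y (sum f S) = (\<Sum>i\<in>S. ip y (f i))"
  by (induction S rule: infinite_finite_induct) (auto simp: ip_add_right)

lemma norm_sc: "norm (sc a x) = cmod a * norm x"
proof -
  have "complex_of_real ((norm (sc a x))\<^sup>2) = a * cnj a * complex_of_real ((norm x)\<^sup>2)"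
    using ip_self[of "sc a x"] ip_sc_left ip_sc_right ip_self[of x] by (simp add: ac_simps)
  also have "a * cnj a = complex_of_real ((cmod a)\<^sup>2)" by (rule complex_norm_square[symmetric])
  finally have "(norm (sc a x))\<^sup>2 = ((cmod a) * norm x)\<^sup>2"
    by (metis of_real_eq_iff of_real_mult power_mult_distrib)
  then show ?thesis by (simp add: power2_eq_iff_nonneg)
qed

lemma Re_ip_expand: "(norm (x - t *\<^sub>R y))\<^sup>2 = (norm x)\<^sup>2 - 2 * t * Re (ip x y) + t\<^sup>2 * (norm y)\<^sup>2"
proof -
  have "complex_of_real ((norm (x - t *\<^sub>R y))\<^sup>2) = ip (x - t *\<^sub>R y) (x - t *\<^sub>R y)" by (simp add: ip_self)
  also have "\<dots> = ip x x - of_real t * ip x y - of_real t * ip y x + of_real t * of_real t * ip y y"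
    by (simp add: ip_diff_left ip_diff_right ip_scaleR_left ip_scaleR_right algebra_simps)
  finally have "(norm (x - t *\<^sub>R y))\<^sup>2 = Re (ip x x - of_real t * ip x y - of_real t * ip y x + of_real t * of_real t * ip y y)"
    by (metis Re_complex_of_real)
  also have "\<dots> = (norm x)\<^sup>2 - 2 * t * Re (ip x y) + t\<^sup>2 * (norm y)\<^sup>2"
    using ip_self[of x] ip_self[of y] ip_sym[of y x] by (simp add: power2_eq_square)
  finally show ?thesis .
qed

lemma Re_ip_le: "\<bar>Re (ip x y)\<bar> \<le> norm x * norm y"
proof (cases "y = 0")
  case True then show ?thesis by simp
next
  case False
  then have ny: "norm y > 0" by simp
  define t where "t = Re (ip x y) / (norm y)\<^sup>2"
  have "0 \<le> (norm (x - t *\<^sub>R y))\<^sup>2" by simp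
  also have "\<dots> = (norm x)\<^sup>2 - (Re (ip x y))\<^sup>2 / (norm y)\<^sup>2"
    unfolding Re_ip_expand t_def using ny by (simp add: field_simps power2_eq_square)
  finally have "(Re (ip x y))\<^sup>2 \<le> (norm x * norm y)\<^sup>2"
    using ny by (simp add: field_simps power_mult_distrib)
  then have "\<bar>Re (ip x y)\<bar> \<le> \<bar>norm x * norm y\<bar>" by (simp only: abs_le_square_iff)
  then show ?thesis by simp
qed

lemma CS: "cmod (ip x y) \<le> norm x * norm y"
proof (cases "ip x y = 0")
  case True then show ?thesis by simp
next
  case False
  define u where "u = cnj (ip x y) / of_real (cmod (ip x y))"
  have cu: "cmod u = 1" using False by (simp add: u_def norm_divide)
  have w: "of_real ((cmod (ip x y))\<^sup>2) = ip x y * cnj (ip x y)" by (rule complex_norm_square)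
  have "ip (sc u x) y = of_real (cmod (ip x y))"
    unfolding ip_sc_left u_def using False w
    by (simp add: field_simps power2_eq_square)
  then have "cmod (ip x y) = Re (ip (sc u x) y)" by simp
  also have "\<dots> \<le> norm (sc u x) * norm y" using Re_ip_le by (meson abs_le_D1)
  finally show ?thesis by (simp add: norm_sc cu)
qed

lemma bl_ip_left: "bounded_linear (\<lambda>x. ip x y)"
  by (rule bounded_linear_intro[where K="norm y"])
     (auto simp: ip_add_left ip_scaleR_left scaleR_conv_of_real CS mult.commute)

lemma bl_sc: "bounded_linear (sc a)"
  by (rule bounded_linear_intro[where K="cmod a"])
     (auto simp: sc_add_right sc_scaleR norm_sc)

lemma ip_suminf_left: "summable X \<Longrightarrow> ip (suminf X) y = (\<Sum>n. ip (X n) y)"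
  using bounded_linear.suminf[OF bl_ip_left] by blast

lemma sc_suminf: "summable X \<Longrightarrow> sc a (suminf X) = (\<Sum>n. sc a (X n))"
  using bounded_linear.suminf[OF bl_sc] by blast

lemma norm_sc_diff_left: "norm (sc a x - sc b x) = cmod (a - b) * norm x"
  by (simp add: sc_diff_left[symmetric] norm_sc)

end



locale rsd = chs +
  fixes lam :: "nat \<Rightarrow> complex" and phi psi :: "nat \<Rightarrow> 'a::banach"
  assumes RS: "riesz_spectral_data sc ip lam phi psi"
begin

lemma inj_lam: "inj lam" and RB: "riesz_basis sc phi"
  and biorth: "ip (phi n) (psi k) = (if n = k then 1 else 0)"
  and fin_lim: "finite {z. z islimpt range lam}"
  using RS unfolding riesz_spectral_data_def by blast+

definition "mR = (SOME m. \<exists>M. 0 < m \<and> 0 < M \<and>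
        (\<forall>N c. m * (\<Sum>n<N. (cmod (c n))\<^sup>2) \<le> (norm (\<Sum>n<N. sc (c n) (phi n)))\<^sup>2 \<and>
               (norm (\<Sum>n<N. sc (c n) (phi n)))\<^sup>2 \<le> M * (\<Sum>n<N. (cmod (c n))\<^sup>2)))"
definition "MR = (SOME M. 0 < mR \<and> 0 < M \<and>
        (\<forall>N c. mR * (\<Sum>n<N. (cmod (c n))\<^sup>2) \<le> (norm (\<Sum>n<N. sc (c n) (phi n)))\<^sup>2 \<and>
               (norm (\<Sum>n<N. sc (c n) (phi n)))\<^sup>2 \<le> M * (\<Sum>n<N. (cmod (c n))\<^sup>2)))"

lemma mM: "0 < mR \<and> 0 < MR \<and>
        (\<forall>N c. mR * (\<Sum>n<N. (cmod (c n))\<^sup>2) \<le> (norm (\<Sum>n<N. sc (c n) (phi n)))\<^sup>2 \<and>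
               (norm (\<Sum>n<N. sc (c n) (phi n)))\<^sup>2 \<le> MR * (\<Sum>n<N. (cmod (c n))\<^sup>2))"
proof -
  have "\<exists>m M. 0 < m \<and> 0 < M \<and>
        (\<forall>N c. m * (\<Sum>n<N. (cmod (c n))\<^sup>2) \<le> (norm (\<Sum>n<N. sc (c n) (phi n)))\<^sup>2 \<and>
               (norm (\<Sum>n<N. sc (c n) (phi n)))\<^sup>2 \<le> M * (\<Sum>n<N. (cmod (c n))\<^sup>2))"
    using RB unfolding riesz_basis_def by blast
  then have "\<exists>M. 0 < mR \<and> 0 < M \<and>
        (\<forall>N c. mR * (\<Sum>n<N. (cmod (c n))\<^sup>2) \<le> (norm (\<Sum>n<N. sc (c n) (phi n)))\<^sup>2 \<and>
               (norm (\<Sum>n<N. sc (c n) (phi n)))\<^sup>2 \<le> M * (\<Sum>n<N. (cmod (c n))\<^sup>2))"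
    unfolding mR_def by (rule someI_ex)
  then show ?thesis unfolding MR_def by (rule someI_ex)
qed

lemma mR_pos: "0 < mR" and MR_pos: "0 < MR" using mM by auto

lemma dense_span: "closure {(\<Sum>n<N. sc (c n) (phi n)) | N c. True} = UNIV"
  using RB unfolding riesz_basis_def by blast

lemma fin_bounds:
  assumes "finite S"
  shows "mR * (\<Sum>n\<in>S. (cmod (c n))\<^sup>2) \<le> (norm (\<Sum>n\<in>S. sc (c n) (phi n)))\<^sup>2"
    and "(norm (\<Sum>n\<in>S. sc (c n) (phi n)))\<^sup>2 \<le> MR * (\<Sum>n\<in>S. (cmod (c n))\<^sup>2)"
proof -
  obtain N where N: "S \<subseteq> {..<N}"
    using assms by (meson finite_nat_iff_bounded subset_eq lessThan_iff)
  define c' where "c' n = (if n \<in> S then c n else 0)" for n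
  have e1: "(\<Sum>n<N. sc (c' n) (phi n)) = (\<Sum>n\<in>S. sc (c n) (phi n))"
  proof -
    have "(\<Sum>n<N. sc (c' n) (phi n)) = (\<Sum>n<N. if n \<in> S then sc (c n) (phi n) else 0)"
      by (rule sum.cong) (auto simp: c'_def)
    also have "\<dots> = (\<Sum>n\<in>{..<N} \<inter> S. sc (c n) (phi n))" by (rule sum.inter_restrict[symmetric]) simp
    finally show ?thesis using N by (simp add: Int_absorb1)
  qed
  have e2: "(\<Sum>n<N. (cmod (c' n))\<^sup>2) = (\<Sum>n\<in>S. (cmod (c n))\<^sup>2)"
  proof -
    have "(\<Sum>n<N. (cmod (c' n))\<^sup>2) = (\<Sum>n<N. if n \<in> S then (cmod (c n))\<^sup>2 else 0)"
      by (rule sum.cong) (auto simp: c'_def)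
    also have "\<dots> = (\<Sum>n\<in>{..<N} \<inter> S. (cmod (c n))\<^sup>2)" by (rule sum.inter_restrict[symmetric]) simp
    finally show ?thesis using N by (simp add: Int_absorb1)
  qed
  have b: "mR * (\<Sum>n<N. (cmod (c' n))\<^sup>2) \<le> (norm (\<Sum>n<N. sc (c' n) (phi n)))\<^sup>2 \<and>
               (norm (\<Sum>n<N. sc (c' n) (phi n)))\<^sup>2 \<le> MR * (\<Sum>n<N. (cmod (c' n))\<^sup>2)"
    using mM by blast
  show "mR * (\<Sum>n\<in>S. (cmod (c n))\<^sup>2) \<le> (norm (\<Sum>n\<in>S. sc (c n) (phi n)))\<^sup>2"
    using b unfolding e1 e2 by blast
  show "(norm (\<Sum>n\<in>S. sc (c n) (phi n)))\<^sup>2 \<le> MR * (\<Sum>n\<in>S. (cmod (c n))\<^sup>2)"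
    using b unfolding e1 e2 by blast
qed

lemma rsum_summable:
  assumes "summable (\<lambda>n. (cmod (c n))\<^sup>2)"
  shows "summable (\<lambda>n. sc (c n) (phi n))"
  unfolding summable_Cauchy
proof (intro allI impI)
  fix e :: real assume e: "e > 0"
  have ep: "e\<^sup>2 / MR > 0" using e MR_pos by simp
  have C: "\<forall>e>0. \<exists>N. \<forall>m\<ge>N. \<forall>n. norm (\<Sum>n\<in>{m..<n}. (cmod (c n))\<^sup>2) < e"
    using assms by (simp only: summable_Cauchy)
  obtain N where N: "\<forall>k\<ge>N. \<forall>l. norm (\<Sum>n\<in>{k..<l}. (cmod (c n))\<^sup>2) < e\<^sup>2 / MR"
    using C[rule_format, OF ep] by (elim exE) assumption
  show "\<exists>N. \<forall>k\<ge>N. \<forall>l. norm (\<Sum>n\<in>{k..<l}. sc (c n) (phi n)) < e"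
  proof (rule exI[of _ N], intro allI impI)
    fix k l assume "N \<le> k"
    then have "norm (\<Sum>n\<in>{k..<l}. (cmod (c n))\<^sup>2) < e\<^sup>2 / MR" using N by blast
    moreover have "norm (\<Sum>n\<in>{k..<l}. (cmod (c n))\<^sup>2) = (\<Sum>n\<in>{k..<l}. (cmod (c n))\<^sup>2)"
      by (simp add: sum_nonneg)
    ultimately have "(\<Sum>n\<in>{k..<l}. (cmod (c n))\<^sup>2) < e\<^sup>2 / MR" by simp
    then have "MR * (\<Sum>n\<in>{k..<l}. (cmod (c n))\<^sup>2) < e\<^sup>2" using MR_pos by (simp add: pos_less_divide_eq mult.commute)
    then have "(norm (\<Sum>n\<in>{k..<l}. sc (c n) (phi n)))\<^sup>2 < e\<^sup>2"
      using fin_bounds(2)[OF finite_atLeastLessThan[of k l], of c] by linarith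
    then show "norm (\<Sum>n\<in>{k..<l}. sc (c n) (phi n)) < e"
      by (rule power_less_imp_less_base) (use e in auto)
  qed
qed

lemma rsum_norm:
  assumes "summable (\<lambda>n. (cmod (c n))\<^sup>2)"
  shows "(norm (\<Sum>n. sc (c n) (phi n)))\<^sup>2 \<le> MR * (\<Sum>n. (cmod (c n))\<^sup>2)"
proof -
  have t: "(\<lambda>N. (norm (\<Sum>n<N. sc (c n) (phi n)))\<^sup>2) \<longlonglongrightarrow> (norm (\<Sum>n. sc (c n) (phi n)))\<^sup>2"
    using rsum_summable[OF assms] by (intro tendsto_intros summable_LIMSEQ)
  have t2: "(\<lambda>N. MR * (\<Sum>n<N. (cmod (c n))\<^sup>2)) \<longlonglongrightarrow> MR * (\<Sum>n. (cmod (c n))\<^sup>2)"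
    using assms by (intro tendsto_intros summable_LIMSEQ)
  show ?thesis
    by (intro LIMSEQ_le[OF t t2] exI[of _ 0] allI impI fin_bounds(2) finite_lessThan)
qed

lemma coeff_single: "(\<Sum>n. c n * (if n = k then 1 else 0)) = (c k :: complex)"
proof -
  have "(\<lambda>n. c n * (if n = k then 1 else 0)) = (\<lambda>n. if n = k then c n else 0)" by auto
  then show ?thesis using sums_single[of k c] sums_unique by metis
qed

lemma rsum_coeff:
  assumes "summable (\<lambda>n. (cmod (c n))\<^sup>2)"
  shows "ip (\<Sum>n. sc (c n) (phi n)) (psi k) = c k"
  using ip_suminf_left[OF rsum_summable[OF assms]] by (simp add: ip_sc_left biorth coeff_single)

lemma fin_coeff: "finite S \<Longrightarrow> ip (\<Sum>n\<in>S. sc (c n) (phi n)) (psi k) = (if k \<in> S then c k else 0)"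
  by (simp add: ip_sum_left ip_sc_left biorth if_distrib cong: if_cong)

lemma phi_nz: "phi n \<noteq> 0" using biorth[of n n] by auto

lemma bessel_phi: "(\<Sum>n<N. (cmod (ip f (phi n)))\<^sup>2) \<le> MR * (norm f)\<^sup>2"
proof -
  define c where "c n = ip f (phi n)" for n
  define v where "v = (\<Sum>n<N. sc (c n) (phi n))"
  define S where "S = (\<Sum>n<N. (cmod (c n))\<^sup>2)"
  have "complex_of_real S = (\<Sum>n<N. complex_of_real ((cmod (c n))\<^sup>2))"
    unfolding S_def by (rule of_real_sum)
  also have "\<dots> = (\<Sum>n<N. cnj (c n) * c n)"
    by (rule sum.cong) (auto simp: complex_norm_square mult.commute simp del: of_real_power)
  also have "\<dots> = ip f v" unfolding v_def c_def by (simp add: ip_sum_right ip_sc_right)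
  finally have "S \<le> norm f * norm v" using CS[of f v] by (metis norm_of_real abs_le_iff order.trans)
  also have "norm v \<le> sqrt (MR * S)" unfolding v_def S_def
    using fin_bounds(2)[of "{..<N}" c] by (simp add: real_le_rsqrt)
  finally have "S \<le> norm f * sqrt (MR * S)" by (simp add: mult_left_mono)
  moreover have S0: "S \<ge> 0" unfolding S_def by (simp add: sum_nonneg)
  ultimately have "S\<^sup>2 \<le> (norm f * sqrt (MR * S))\<^sup>2" by (intro power_mono) auto
  also have "\<dots> = (norm f)\<^sup>2 * (MR * S)"
    using S0 MR_pos by (simp add: power_mult_distrib)
  finally have "S\<^sup>2 \<le> (norm f)\<^sup>2 * (MR * S)" .
  then have "S * S \<le> S * (MR * (norm f)\<^sup>2)" by (simp add: power2_eq_square algebra_simps)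
  have "S \<le> MR * (norm f)\<^sup>2"
  proof (cases "S = 0")
    case True then show ?thesis using MR_pos by simp
  next
    case False with S0 have "S > 0" by simp
    then show ?thesis by (intro mult_left_le_imp_le[OF \<open>S * S \<le> S * (MR * (norm f)\<^sup>2)\<close>])
  qed
  then show ?thesis unfolding S_def c_def .
qed

lemma summable_bessel_phi: "summable (\<lambda>n. (cmod (ip f (phi n)))\<^sup>2)"
  by (rule summableI_nonneg_bounded[where x="MR * (norm f)^2"]) (use bessel_phi in auto)

end



context rsd begin

lemma cont_ip_left: "continuous_on UNIV (\<lambda>x. ip x y)"
  by (rule linear_continuous_on[OF bl_ip_left])

lemma span_form:
  assumes "u \<in> {(\<Sum>n<N. sc (c n) (phi n)) | N c. True}"
  obtains K a where "u = (\<Sum>n<K. sc (a n) (phi n))"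
  using assms by blast

lemma span_extend:
  assumes "K \<le> L"
  shows "(\<Sum>n<K. sc (a n) (phi n)) = (\<Sum>n<L. sc (if n < K then a n else 0) (phi n))"
proof -
  have "(\<Sum>n<L. sc (if n < K then a n else 0) (phi n)) = (\<Sum>n<L. if n \<in> {..<K} then sc (a n) (phi n) else 0)"
    by (rule sum.cong) auto
  also have "\<dots> = (\<Sum>n\<in>{..<L} \<inter> {..<K}. sc (a n) (phi n))" by (rule sum.inter_restrict[symmetric]) simp
  also have "{..<L} \<inter> {..<K} = {..<K}" using assms by auto
  finally show ?thesis by simp
qed

lemma bessel_psi_span:
  assumes "u = (\<Sum>n<K. sc (a n) (phi n))"
  shows "mR * (\<Sum>n<N. (cmod (ip u (psi n)))\<^sup>2) \<le> (norm u)\<^sup>2"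
proof -
  define L where "L = max N K"
  define a' where "a' n = (if n < K then a n else 0)" for n
  have co: "ip u (psi n) = a' n" for n
    unfolding assms a'_def using fin_coeff[of "{..<K}" a n] by simp
  have u: "u = (\<Sum>n<L. sc (a' n) (phi n))" unfolding assms a'_def L_def
    by (rule span_extend) simp
  have "(\<Sum>n<N. (cmod (ip u (psi n)))\<^sup>2) = (\<Sum>n<N. (cmod (a' n))\<^sup>2)" by (simp add: co)
  also have "\<dots> \<le> (\<Sum>n<L. (cmod (a' n))\<^sup>2)" by (rule sum_mono2) (auto simp: L_def)
  finally have "mR * (\<Sum>n<N. (cmod (ip u (psi n)))\<^sup>2) \<le> mR * (\<Sum>n<L. (cmod (a' n))\<^sup>2)"
    using mR_pos by (simp add: mult_left_mono)
  also have "\<dots> \<le> (norm u)\<^sup>2" unfolding u by (rule fin_bounds(1)) simp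
  finally show ?thesis .
qed

lemma bessel_psi: "mR * (\<Sum>n<N. (cmod (ip x (psi n)))\<^sup>2) \<le> (norm x)\<^sup>2"
proof -
  let ?P = "{x. mR * (\<Sum>n<N. (cmod (ip x (psi n)))\<^sup>2) \<le> (norm x)\<^sup>2}"
  have cl: "closed ?P"
  proof (rule closed_Collect_le)
    show "continuous_on UNIV (\<lambda>x. mR * (\<Sum>n<N. (cmod (ip x (psi n)))\<^sup>2))"
      by (intro continuous_on_mult continuous_on_const continuous_on_sum continuous_on_power
          continuous_on_norm cont_ip_left)
    show "continuous_on UNIV (\<lambda>x. (norm x)\<^sup>2)"
      by (intro continuous_on_power continuous_on_norm continuous_on_id)
  qed
  have "{(\<Sum>n<N. sc (c n) (phi n)) | N c. True} \<subseteq> ?P"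
  proof
    fix u assume "u \<in> {(\<Sum>n<N. sc (c n) (phi n)) | N c. True}"
    then obtain K a where "u = (\<Sum>n<K. sc (a n) (phi n))" by (rule span_form)
    then show "u \<in> ?P" using bessel_psi_span by blast
  qed
  then have "closure {(\<Sum>n<N. sc (c n) (phi n)) | N c. True} \<subseteq> ?P"
    using cl by (rule closure_minimal)
  then show ?thesis using dense_span by blast
qed

lemma summable_bessel_psi: "summable (\<lambda>n. (cmod (ip x (psi n)))\<^sup>2)"
proof (rule summableI_nonneg_bounded[where x="(norm x)^2 / mR"])
  fix N show "(\<Sum>n<N. (cmod (ip x (psi n)))\<^sup>2) \<le> (norm x)\<^sup>2 / mR"
    using bessel_psi[where N=N and x=x] mR_pos by (simp add: pos_le_divide_eq mult.commute)
qed simp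

lemma psi_complete:
  assumes w: "\<And>n. ip w (psi n) = 0"
  shows "w = 0"
proof -
  define K where "K = sqrt (MR / mR) + 1"
  have "0 \<le> sqrt (MR / mR)" using mR_pos MR_pos by simp
  then have K: "K > 0" unfolding K_def by linarith
  have bnd: "norm w \<le> K * e" if e: "e > 0" for e
  proof -
    have "w \<in> closure {(\<Sum>n<N. sc (c n) (phi n)) | N c. True}" using dense_span by simp
    then obtain u where u: "u \<in> {(\<Sum>n<N. sc (c n) (phi n)) | N c. True}" and d: "dist u w < e"
      using e unfolding closure_approachable by blast
    obtain L a where ua: "u = (\<Sum>n<L. sc (a n) (phi n))" using u by (rule span_form)
    have co: "ip u (psi n) = ip (u - w) (psi n)" for n by (simp add: ip_diff_left w)
    have "(norm u)\<^sup>2 \<le> MR * (\<Sum>n<L. (cmod (a n))\<^sup>2)"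
      unfolding ua by (rule fin_bounds(2)) simp
    also have "(\<Sum>n<L. (cmod (a n))\<^sup>2) = (\<Sum>n<L. (cmod (ip u (psi n)))\<^sup>2)"
      unfolding ua by (rule sum.cong) (simp_all add: fin_coeff)
    also have "\<dots> = (\<Sum>n<L. (cmod (ip (u - w) (psi n)))\<^sup>2)" by (simp add: co)
    also have "\<dots> \<le> (norm (u - w))\<^sup>2 / mR"
      using bessel_psi[where N=L and x="u - w"] mR_pos by (simp add: pos_le_divide_eq mult.commute)
    finally have "(norm u)\<^sup>2 \<le> MR * ((norm (u - w))\<^sup>2 / mR)" using MR_pos by (simp add: mult_left_mono)
    also have "\<dots> = (sqrt (MR / mR))\<^sup>2 * (norm (u - w))\<^sup>2"
    proof -
      have "(sqrt (MR / mR))\<^sup>2 = MR / mR" using MR_pos mR_pos by simp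
      then show ?thesis by simp
    qed
    also have "\<dots> = (sqrt (MR / mR) * norm (u - w))\<^sup>2" by (simp only: power_mult_distrib)
    finally have "norm u \<le> sqrt (MR / mR) * norm (u - w)"
      by (rule power2_le_imp_le) (intro mult_nonneg_nonneg real_sqrt_ge_zero divide_nonneg_nonneg less_imp_le[OF MR_pos] less_imp_le[OF mR_pos] norm_ge_zero)
    also have "\<dots> \<le> sqrt (MR / mR) * e" using d MR_pos mR_pos by (intro mult_left_mono) (simp_all add: dist_norm less_imp_le)
    finally have nu: "norm u \<le> sqrt (MR / mR) * e" .
    have "norm w \<le> norm u + norm (u - w)" by (metis norm_triangle_sub add.commute norm_minus_commute)
    also have "\<dots> \<le> sqrt (MR / mR) * e + e" using nu d by (simp add: dist_norm)
    finally show ?thesis unfolding K_def by (simp add: algebra_simps)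
  qed
  show ?thesis
  proof (rule ccontr)
    assume "w \<noteq> 0"
    then have "norm w / (2 * K) > 0" using K by simp
    from bnd[OF this] have "norm w \<le> norm w / 2" using K by simp
    then show False using \<open>w \<noteq> 0\<close> by simp
  qed
qed

lemma expansion: "x = (\<Sum>n. sc (ip x (psi n)) (phi n))"
proof -
  define y where "y = (\<Sum>n. sc (ip x (psi n)) (phi n))"
  have "ip (x - y) (psi k) = 0" for k
    unfolding y_def ip_diff_left using rsum_coeff[OF summable_bessel_psi] by simp
  then have "x - y = 0" by (rule psi_complete)
  then show ?thesis unfolding y_def by simp
qed

end



context rsd begin

abbreviation "DA \<equiv> rs_dom ip lam psi"
abbreviation "AA \<equiv> rs_op sc ip lam phi psi"

lemma sq_summable_cmp:
  assumes "summable (\<lambda>n. (cmod (c n))\<^sup>2)" and "\<And>n. cmod (d n) \<le> K * cmod (c n)"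
  shows "summable (\<lambda>n. (cmod (d n))\<^sup>2)"
proof (rule summable_comparison_test[OF _ summable_mult[OF assms(1), of "K\<^sup>2"]])
  show "\<exists>N. \<forall>n\<ge>N. norm ((cmod (d n))\<^sup>2) \<le> K\<^sup>2 * (cmod (c n))\<^sup>2"
  proof (intro exI allI impI)
    fix n
    have "(cmod (d n))\<^sup>2 \<le> (K * cmod (c n))\<^sup>2" using assms(2)[of n] by (intro power_mono) auto
    then show "norm ((cmod (d n))\<^sup>2) \<le> K\<^sup>2 * (cmod (c n))\<^sup>2" by (simp add: power_mult_distrib)
  qed
qed

lemma dom_summable: "x \<in> DA \<Longrightarrow> summable (\<lambda>n. (cmod (lam n * ip x (psi n)))\<^sup>2)"
  unfolding rs_dom_def by (simp add: norm_mult power_mult_distrib)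

lemma op_coeff: "x \<in> DA \<Longrightarrow> ip (AA x) (psi k) = lam k * ip x (psi k)"
  unfolding rs_op_def using rsum_coeff[OF dom_summable] by blast

lemma op_summable: "x \<in> DA \<Longrightarrow> summable (\<lambda>n. sc (lam n * ip x (psi n)) (phi n))"
  using rsum_summable[OF dom_summable] by blast

lemma phi_dom: "phi n \<in> DA"
proof -
  have "(\<lambda>k. (cmod (lam k))\<^sup>2 * (cmod (ip (phi n) (psi k)))\<^sup>2) = (\<lambda>k. if k = n then (cmod (lam n))\<^sup>2 else 0)"
    by (auto simp: biorth)
  then show ?thesis unfolding rs_dom_def using summable_single[of n "\<lambda>_. (cmod (lam n))\<^sup>2"] by simp
qed

lemma op_phi: "AA (phi n) = sc (lam n) (phi n)"
proof -
  have "(\<lambda>k. sc (lam k * ip (phi n) (psi k)) (phi k)) = (\<lambda>k. if k = n then sc (lam n) (phi n) else 0)"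
    by (auto simp: biorth)
  then show ?thesis unfolding rs_op_def using sums_single[of n "\<lambda>_. sc (lam n) (phi n)"] sums_unique by metis
qed

lemma res_gap:
  assumes "z \<in> resolvent_set sc DA AA"
  shows "\<exists>\<delta>>0. \<forall>n. \<delta> \<le> cmod (z - lam n)"
proof -
  obtain C where C: "\<forall>x\<in>DA. norm x \<le> C * norm (sc z x - AA x)"
    using assms unfolding resolvent_set_def by blast
  have *: "1 \<le> C * cmod (z - lam n)" for n
  proof -
    have "norm (phi n) \<le> C * norm (sc z (phi n) - sc (lam n) (phi n))"
      using C phi_dom op_phi by metis
    also have "\<dots> = (C * cmod (z - lam n)) * norm (phi n)" by (simp add: norm_sc_diff_left)
    finally show ?thesis using phi_nz[of n] by simp
  qed
  have "C > 0"
  proof (rule ccontr)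
    assume "\<not> 0 < C"
    then have "C * cmod (z - lam 0) \<le> 0" by (intro mult_nonpos_nonneg) auto
    with *[of 0] show False by simp
  qed
  then show ?thesis
    by (intro exI[of _ "1/C"] conjI allI) (use * in \<open>simp_all add: divide_le_eq mult.commute\<close>)
qed

lemma res_sol:
  assumes "z \<in> resolvent_set sc DA AA"
  shows "resolvent sc DA AA z b \<in> DA \<and> sc z (resolvent sc DA AA z b) - AA (resolvent sc DA AA z b) = b"
proof -
  have "\<exists>!x. x \<in> DA \<and> sc z x - AA x = b" using assms unfolding resolvent_set_def by blast
  then show ?thesis unfolding resolvent_def by (rule theI')
qed

lemma ip_expand: "ip x f = (\<Sum>n. ip x (psi n) * ip (phi n) f)"
proof -
  have "ip x f = ip (\<Sum>n. sc (ip x (psi n)) (phi n)) f" using expansion[of x] by simp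
  also have "\<dots> = (\<Sum>n. ip (sc (ip x (psi n)) (phi n)) f)"
    by (rule ip_suminf_left[OF rsum_summable[OF summable_bessel_psi]])
  finally show ?thesis by (simp add: ip_sc_left)
qed

lemma res_formula:
  assumes z: "z \<in> resolvent_set sc DA AA"
  shows "ip (resolvent sc DA AA z b) f = (\<Sum>n. ip b (psi n) / (z - lam n) * ip (phi n) f)"
proof -
  define x where "x = resolvent sc DA AA z b"
  have xD: "x \<in> DA" and xe: "sc z x - AA x = b" using res_sol[OF z] unfolding x_def by auto
  obtain \<delta> where d: "\<delta> > 0" "\<And>n. \<delta> \<le> cmod (z - lam n)" using res_gap[OF z] by blast
  have co: "ip x (psi n) = ip b (psi n) / (z - lam n)" for n
  proof -
    have ne: "z - lam n \<noteq> 0" using d(1) d(2)[of n] by (metis norm_zero not_le)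
    have "ip b (psi n) = z * ip x (psi n) - lam n * ip x (psi n)"
      unfolding xe[symmetric] ip_diff_left ip_sc_left op_coeff[OF xD] ..
    then show ?thesis using ne by (simp add: field_simps)
  qed
  show ?thesis unfolding x_def[symmetric] ip_expand[of x f] co ..
qed

lemma construct_sol:
  assumes J: "\<And>n. lam n = z \<Longrightarrow> ip b (psi n) = 0"
    and d: "\<delta> > 0" "\<And>n. lam n \<noteq> z \<Longrightarrow> \<delta> \<le> cmod (z - lam n)"
  defines "c \<equiv> \<lambda>n. if lam n = z then 0 else ip b (psi n) / (z - lam n)"
  defines "x \<equiv> (\<Sum>n. sc (c n) (phi n))"
  shows "x \<in> DA" "sc z x - AA x = b" "ip x f = (\<Sum>n. c n * ip (phi n) f)"
proof -
  have bs: "summable (\<lambda>n. (cmod (ip b (psi n)))\<^sup>2)" by (rule summable_bessel_psi)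
  have cb: "cmod (c n) \<le> (1/\<delta>) * cmod (ip b (psi n))" for n
  proof (cases "lam n = z")
    case True then show ?thesis using d by (simp add: c_def)
  next
    case False
    then have "\<delta> \<le> cmod (z - lam n)" using d by simp
    then have "\<delta> * cmod (ip b (psi n)) \<le> cmod (z - lam n) * cmod (ip b (psi n))"
      by (intro mult_right_mono) auto
    then show ?thesis using False d(1) unfolding c_def
      by (simp add: norm_divide divide_le_eq field_simps)
  qed
  have cs: "summable (\<lambda>n. (cmod (c n))\<^sup>2)" by (rule sq_summable_cmp[OF bs cb])
  have co: "ip x (psi n) = c n" for n unfolding x_def by (rule rsum_coeff[OF cs])
  have lcb: "cmod (lam n * c n) \<le> (cmod z / \<delta> + 1) * cmod (ip b (psi n))" for n
  proof (cases "lam n = z")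
    case True
    have "0 \<le> cmod z / \<delta>" using d(1) by simp
    then have "0 \<le> (cmod z / \<delta> + 1) * cmod (ip b (psi n))" by simp
    then show ?thesis using True by (simp add: c_def)
  next
    case False
    then have dn: "\<delta> \<le> cmod (z - lam n)" using d by simp
    then have pos: "cmod (z - lam n) > 0" using d(1) by linarith
    have "cmod (lam n) \<le> cmod z + cmod (z - lam n)" by (metis norm_minus_commute norm_triangle_sub add.commute)
    then have "cmod (lam n) / cmod (z - lam n) \<le> (cmod z + cmod (z - lam n)) / cmod (z - lam n)"
      by (rule divide_right_mono) (use pos in simp)
    also have "\<dots> = cmod z / cmod (z - lam n) + 1" using pos by (simp add: add_divide_distrib)
    also have "cmod z / cmod (z - lam n) \<le> cmod z / \<delta>" using dn d(1) pos by (intro divide_left_mono) auto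
    finally have r: "cmod (lam n) / cmod (z - lam n) \<le> cmod z / \<delta> + 1" by simp
    have "cmod (lam n * c n) = (cmod (lam n) / cmod (z - lam n)) * cmod (ip b (psi n))"
      using False by (simp add: c_def norm_mult norm_divide)
    also have "\<dots> \<le> (cmod z / \<delta> + 1) * cmod (ip b (psi n))" using r by (intro mult_right_mono) auto
    finally show ?thesis .
  qed
  have lcs: "summable (\<lambda>n. (cmod (lam n * c n))\<^sup>2)" by (rule sq_summable_cmp[OF bs lcb])
  show xD: "x \<in> DA" unfolding rs_dom_def using lcs by (simp add: co norm_mult power_mult_distrib)
  have Ax: "AA x = (\<Sum>n. sc (lam n * c n) (phi n))" unfolding rs_op_def co ..
  have s1: "summable (\<lambda>n. sc (c n) (phi n))" by (rule rsum_summable[OF cs])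
  have s2: "summable (\<lambda>n. sc (lam n * c n) (phi n))" by (rule rsum_summable[OF lcs])
  have s3: "summable (\<lambda>n. sc z (sc (c n) (phi n)))" using bounded_linear.summable[OF bl_sc s1] .
  have "sc z x - AA x = (\<Sum>n. sc z (sc (c n) (phi n))) - (\<Sum>n. sc (lam n * c n) (phi n))"
    unfolding Ax unfolding x_def sc_suminf[OF s1] ..
  also have "\<dots> = (\<Sum>n. sc z (sc (c n) (phi n)) - sc (lam n * c n) (phi n))"
    by (rule suminf_diff[OF s3 s2])
  also have "\<dots> = (\<Sum>n. sc (ip b (psi n)) (phi n))"
  proof (rule suminf_cong)
    fix n
    have "(z - lam n) * c n = ip b (psi n)"
      using J[of n] by (cases "lam n = z") (auto simp: c_def)
    then show "sc z (sc (c n) (phi n)) - sc (lam n * c n) (phi n) = sc (ip b (psi n)) (phi n)"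
      by (metis sc_mult sc_diff_left left_diff_distrib)
  qed
  also have "\<dots> = b" using expansion[of b] by simp
  finally show "sc z x - AA x = b" .
  show "ip x f = (\<Sum>n. c n * ip (phi n) f)" unfolding ip_expand[of x f] co ..
qed

end



lemma exp_quot_lim: fixes z :: complex shows "((\<lambda>h::real. (exp (z * of_real h) - 1) / of_real h) \<longlongrightarrow> z) (at_right 0)"
proof -
  have D: "((\<lambda>w. exp (z * w)) has_field_derivative z) (at 0)"
    by (auto intro!: derivative_eq_intros)
  then have L: "((\<lambda>w. (exp (z * w) - 1) / w) \<longlongrightarrow> z) (at 0)"
    unfolding DERIV_def by simp
  have F: "filterlim (\<lambda>h::real. complex_of_real h) (at 0) (at_right 0)"
    unfolding filterlim_at
  proof
    show "\<forall>\<^sub>F h in at_right 0. complex_of_real h \<in> UNIV \<and> complex_of_real h \<noteq> 0"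
      using eventually_at_right_less[of "0::real"] by eventually_elim simp
    have "((\<lambda>h::real. complex_of_real h) \<longlongrightarrow> complex_of_real 0) (at_right 0)"
      by (intro tendsto_intros)
    then show "((\<lambda>h::real. complex_of_real h) \<longlongrightarrow> 0) (at_right 0)" by simp
  qed
  show ?thesis using filterlim_compose[OF L F] by simp
qed

lemma t_over_n: "t > 0 \<Longrightarrow> filterlim (\<lambda>n. t / real n) (at_right 0) sequentially"
  unfolding filterlim_at
proof
  assume t: "t > 0"
  show "\<forall>\<^sub>F n in sequentially. t / real n \<in> {0<..} \<and> t / real n \<noteq> 0"
    unfolding eventually_sequentially using t by (intro exI[of _ 1]) auto
  show "((\<lambda>n. t / real n) \<longlongrightarrow> 0) sequentially" by (rule lim_const_over_n)
qed

context chs begin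

lemma bl_sc_left: "bounded_linear (\<lambda>a. sc a x)"
  by (rule bounded_linear_intro[where K="norm x"])
     (auto simp: sc_add_left norm_sc scaleR_conv_of_real sc_mult sc_real)

lemma no_eigen:
  assumes gen: "generates sc D G T" and ps: "poly_stable sc \<alpha> T"
    and xD: "x \<in> D" and eig: "sc z x - G x = 0" and Rz: "0 \<le> Re z"
  shows "x = 0"
proof -
  have C0: "C0_semigroup sc T" and gd: "gen_dom T = D" and gG: "\<And>y. y \<in> D \<Longrightarrow> gen T y = G y"
    using gen unfolding generates_def by auto
  have blT: "\<And>t. t \<ge> 0 \<Longrightarrow> bounded_linear (T t)"
    and scT: "\<And>t c y. t \<ge> 0 \<Longrightarrow> T t (sc c y) = sc c (T t y)"
    and T0: "T 0 = id"
    and semi: "\<And>t s. 0 \<le> t \<Longrightarrow> 0 \<le> s \<Longrightarrow> T (t + s) = T t \<circ> T s"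
    using C0 unfolding C0_semigroup_def by auto
  obtain M where M: "\<And>t y. t \<ge> 0 \<Longrightarrow> norm (T t y) \<le> M * norm y"
    using ps unfolding poly_stable_def by blast
  have res: "\<And>s. \<i> * complex_of_real s \<in> resolvent_set sc (gen_dom T) (gen T)"
    using ps unfolding poly_stable_def by blast
  have gx: "gen T x = sc z x" using eig gG[OF xD] by simp
  show ?thesis
  proof (cases "Re z = 0")
    case True
    then have zi: "z = \<i> * complex_of_real (Im z)" by (simp add: complex_eq_iff)
    have u: "\<exists>!y. y \<in> gen_dom T \<and> sc z y - gen T y = 0"
      using res[of "Im z"] unfolding resolvent_set_def zi[symmetric] by blast
    have ev0: "\<forall>\<^sub>F h in at_right 0. (1 / h) *\<^sub>R (T h 0 - 0) = (0::'a)"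
      using eventually_at_right_less[of "0::real"]
      by eventually_elim (simp add: linear_simps(3)[OF blT])
    have lim0: "((\<lambda>h. (1 / h) *\<^sub>R (T h 0 - 0)) \<longlongrightarrow> (0::'a)) (at_right 0)"
      by (rule tendsto_eventually[OF ev0])
    have "0 \<in> gen_dom T" unfolding gen_dom_def using lim0 by blast
    moreover have "gen T 0 = 0" unfolding gen_def using lim0 by (intro tendsto_Lim) simp_all
    moreover have "x \<in> gen_dom T" using xD gd by simp
    ultimately have P1: "x \<in> gen_dom T \<and> sc z x - gen T x = 0"
      and P2: "(0::'a) \<in> gen_dom T \<and> sc z 0 - gen T 0 = 0" using gx by simp_all
    show "x = 0" using u P1 P2 by blast
  next
    case False
    then have Rz': "Re z > 0" using Rz by simp
    show "x = 0"
    proof (rule ccontr)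
      assume xn: "x \<noteq> 0"
      have Mge: "1 \<le> M" using M[of 0 x] T0 xn by simp
      have xg: "x \<in> gen_dom T" using xD gd by simp
      then obtain y where y: "((\<lambda>h. (1 / h) *\<^sub>R (T h x - x)) \<longlongrightarrow> y) (at_right 0)"
        unfolding gen_dom_def by blast
      then have "gen T x = y" unfolding gen_def by (intro tendsto_Lim) simp_all
      then have dl: "((\<lambda>h. (1 / h) *\<^sub>R (T h x - x)) \<longlongrightarrow> sc z x) (at_right 0)"
        using y gx by simp
      define r where "r h = T h x - sc (exp (z * of_real h)) x" for h
      have q0: "((\<lambda>h. (1 / h) *\<^sub>R r h) \<longlongrightarrow> 0) (at_right 0)"
      proof -
        have e2: "((\<lambda>h. sc ((exp (z * of_real h) - 1) / of_real h) x) \<longlongrightarrow> sc z x) (at_right 0)"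
          by (rule bounded_linear.tendsto[OF bl_sc_left exp_quot_lim])
        have "((\<lambda>h. (1 / h) *\<^sub>R (T h x - x) - sc ((exp (z * of_real h) - 1) / of_real h) x)
               \<longlongrightarrow> sc z x - sc z x) (at_right 0)"
          by (rule tendsto_diff[OF dl e2])
        moreover have "(1 / h) *\<^sub>R (T h x - x) - sc ((exp (z * of_real h) - 1) / of_real h) x
                        = (1 / h) *\<^sub>R r h" for h
        proof -
          have "(1 / h) *\<^sub>R (sc (exp (z * of_real h)) x - x) = sc (of_real (1 / h)) (sc (exp (z * of_real h) - 1) x)"
            by (simp only: sc_real sc_diff_left sc_1)
          also have "\<dots> = sc (of_real (1 / h) * (exp (z * of_real h) - 1)) x" by (simp only: sc_mult)
          also have "of_real (1 / h) * (exp (z * of_real h) - 1) = (exp (z * of_real h) - 1) / of_real h"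
            by (simp add: divide_inverse mult.commute)
          finally have "sc ((exp (z * of_real h) - 1) / of_real h) x = (1 / h) *\<^sub>R (sc (exp (z * of_real h)) x - x)" by simp
          then show ?thesis unfolding r_def by (simp add: algebra_simps)
        qed
        ultimately show ?thesis by simp
      qed
      have step: "norm (T (real k * h) x - sc (exp (z * of_real (real k * h))) x)
                   \<le> real k * exp (Re z * (real k * h)) * (M * norm (r h))" if h: "h > 0" for h k
      proof (induction k)
        case 0 then show ?case using T0 by simp
      next
        case (Suc k)
        define E where "E = exp (z * of_real (real k * h))"
        define e where "e = exp (z * of_real h)"
        have kh: "real k * h \<ge> 0" using h by simp
        have "T (real (Suc k) * h) x = T (real k * h) (T h x)"
          using semi[OF kh, of h] h by (simp add: algebra_simps)
        also have "T h x = sc e x + r h" unfolding r_def e_def by simp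
        also have "T (real k * h) (sc e x + r h) = sc e (T (real k * h) x) + T (real k * h) (r h)"
          using linear_simps(1)[OF blT[OF kh]] scT[OF kh] by simp
        finally have A: "T (real (Suc k) * h) x = sc e (T (real k * h) x) + T (real k * h) (r h)" .
        have B: "exp (z * of_real (real (Suc k) * h)) = e * E"
          unfolding e_def E_def by (simp add: exp_add[symmetric] algebra_simps)
        have "T (real (Suc k) * h) x - sc (exp (z * of_real (real (Suc k) * h))) x
              = sc e (T (real k * h) x - sc E x) + T (real k * h) (r h)"
          unfolding A B by (simp add: sc_mult sc_diff_right)
        then have "norm (T (real (Suc k) * h) x - sc (exp (z * of_real (real (Suc k) * h))) x)
              \<le> cmod e * norm (T (real k * h) x - sc E x) + M * norm (r h)"
          using M[OF kh, of "r h"] norm_triangle_ineq[of "sc e (T (real k * h) x - sc E x)" "T (real k * h) (r h)"]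
          by (simp add: norm_sc)
        also have "\<dots> \<le> exp (Re z * h) * (real k * exp (Re z * (real k * h)) * (M * norm (r h))) + M * norm (r h)"
          using Suc.IH Mge unfolding E_def e_def by (intro add_mono mult_left_mono) simp_all
        also have "\<dots> = real k * exp (Re z * (real (Suc k) * h)) * (M * norm (r h)) + M * norm (r h)"
          by (simp add: exp_add[symmetric] algebra_simps)
        also have "\<dots> \<le> real k * exp (Re z * (real (Suc k) * h)) * (M * norm (r h)) + exp (Re z * (real (Suc k) * h)) * (M * norm (r h))"
        proof -
          have "1 \<le> exp (Re z * (real (Suc k) * h))" using Rz h by simp
          then have "1 * (M * norm (r h)) \<le> exp (Re z * (real (Suc k) * h)) * (M * norm (r h))"
            using Mge by (intro mult_right_mono) simp_all
          then show ?thesis by simp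
        qed
        also have "\<dots> = real (Suc k) * exp (Re z * (real (Suc k) * h)) * (M * norm (r h))"
          by (simp add: algebra_simps)
        finally show ?case .
      qed
      have orbit: "T t x = sc (exp (z * of_real t)) x" if t: "t > 0" for t
      proof -
        define K where "K = t * exp (Re z * t) * M"
        have bnd: "norm (T t x - sc (exp (z * of_real t)) x) \<le> K * norm ((1 / (t / real n)) *\<^sub>R r (t / real n))"
          if n: "n \<ge> 1" for n
        proof -
          have hp: "t / real n > 0" using t n by simp
          have tn: "real n * (t / real n) = t" using n by simp
          have "norm (T t x - sc (exp (z * of_real t)) x)
               \<le> real n * exp (Re z * t) * (M * norm (r (t / real n)))"
            using step[OF hp, of n] unfolding tn .
          also have "\<dots> = K * norm ((1 / (t / real n)) *\<^sub>R r (t / real n))"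
            unfolding K_def using t n by (simp add: field_simps)
          finally show ?thesis .
        qed
        have "((\<lambda>n. K * norm ((1 / (t / real n)) *\<^sub>R r (t / real n))) \<longlongrightarrow> K * norm (0::'a)) sequentially"
          by (intro tendsto_intros filterlim_compose[OF q0 t_over_n[OF t]])
        then have "norm (T t x - sc (exp (z * of_real t)) x) \<le> K * norm (0::'a)"
          by (rule LIMSEQ_le_const) (use bnd in blast)
        then show ?thesis by simp
      qed
      define t where "t = (ln (\<bar>M\<bar> + 1) + 1) / Re z"
      have "0 \<le> ln (\<bar>M\<bar> + 1)" by simp
      then have "0 < ln (\<bar>M\<bar> + 1) + 1" by linarith
      then have tp: "t > 0" unfolding t_def using Rz' by (rule divide_pos_pos)
      have "Re z * t = ln (\<bar>M\<bar> + 1) + 1" unfolding t_def using Rz' by simp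
      then have "exp (Re z * t) = (\<bar>M\<bar> + 1) * exp 1" by (simp add: exp_add)
      moreover have "(\<bar>M\<bar> + 1) * 1 < (\<bar>M\<bar> + 1) * exp 1" by (intro mult_strict_left_mono) auto
      ultimately have big: "exp (Re z * t) > M" by simp
      have "exp (Re z * t) * norm x = norm (T t x)" using orbit[OF tp] by (simp add: norm_sc)
      also have "\<dots> \<le> M * norm x" using M[of t x] tp by simp
      finally have "exp (Re z * t) \<le> M" using xn by simp
      then show False using big by simp
    qed
  qed
qed

end



locale mctx = rsd +
  fixes b f :: 'a and \<alpha> \<omega> \<Upsilon> \<beta> \<gamma> :: real
  assumes alpha_pos: "0 < \<alpha>" and om: "0 < \<omega>" and Ups: "0 < \<Upsilon>"
    and finE: "finite {n. - \<omega> < Re (lam n) \<and> lam n \<notin> Omega \<alpha> \<Upsilon>}"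
    and bet: "0 \<le> \<beta>" and gam: "0 \<le> \<gamma>"
    and bD: "b \<in> Dpow ip lam psi \<beta>" and fD: "f \<in> Dpow ip lam phi \<gamma>"
    and abg: "\<alpha> \<le> \<beta> + \<gamma>"
begin

lemma div_anti: "0 < (u::real) \<Longrightarrow> u \<le> v \<Longrightarrow> 0 \<le> w \<Longrightarrow> w / v \<le> w / u"
  by (rule divide_left_mono) (auto intro: mult_pos_pos)

definition "EE = {n. - \<omega> < Re (lam n) \<and> lam n \<notin> Omega \<alpha> \<Upsilon>}"
definition "bn n = ip b (psi n)"
definition "fn n = ip (phi n) f"
definition "W n = cmod (bn n) * cmod (fn n) * (1 + cmod (lam n) powr \<alpha>)"

lemma fn_cmod: "cmod (fn n) = cmod (ip f (phi n))"
  unfolding fn_def by (metis complex_mod_cnj ip_sym)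

lemma pow_split: "x \<ge> 0 \<Longrightarrow> x powr \<alpha> \<le> 1 + x powr \<beta> * x powr \<gamma>"
proof -
  assume x: "x \<ge> 0"
  show ?thesis
  proof (cases "x \<ge> 1")
    case True
    then have "x powr \<alpha> \<le> x powr (\<beta> + \<gamma>)" using abg by (intro powr_mono) auto
    also have "\<dots> = x powr \<beta> * x powr \<gamma>" by (rule powr_add)
    finally show ?thesis by (simp add: add_increasing)
  next
    case False
    then have "x powr \<alpha> \<le> 1 powr \<alpha>" using x alpha_pos by (intro powr_mono2) auto
    then have "x powr \<alpha> \<le> 1" by simp
    moreover have "0 \<le> x powr \<beta> * x powr \<gamma>" by simp
    ultimately show ?thesis by linarith
  qed
qed

lemma W_summable: "summable W"
proof -
  define B where "B n = (cmod (bn n))\<^sup>2 + (cmod (fn n))\<^sup>2 +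
      (cmod (lam n) powr (2 * \<beta>) * (cmod (bn n))\<^sup>2 + cmod (lam n) powr (2 * \<gamma>) * (cmod (fn n))\<^sup>2)" for n
  have s1: "summable (\<lambda>n. (cmod (bn n))\<^sup>2)" unfolding bn_def by (rule summable_bessel_psi)
  have s2: "summable (\<lambda>n. (cmod (fn n))\<^sup>2)" unfolding fn_cmod by (rule summable_bessel_phi)
  have s3: "summable (\<lambda>n. cmod (lam n) powr (2 * \<beta>) * (cmod (bn n))\<^sup>2)"
    using bD unfolding Dpow_def bn_def by simp
  have s4: "summable (\<lambda>n. cmod (lam n) powr (2 * \<gamma>) * (cmod (fn n))\<^sup>2)"
    using fD unfolding Dpow_def fn_cmod by simp
  have sB: "summable B" unfolding B_def by (intro summable_add s1 s2 s3 s4)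
  show ?thesis
  proof (rule summable_comparison_test[OF _ sB], intro exI allI impI)
    fix n :: nat
    define x where "x = cmod (lam n)"
    define p where "p = cmod (bn n)"
    define q where "q = cmod (fn n)"
    have x0: "x \<ge> 0" and p0: "p \<ge> 0" and q0: "q \<ge> 0" unfolding x_def p_def q_def by simp_all
    have "W n = p * q * (1 + x powr \<alpha>)" unfolding W_def x_def p_def q_def ..
    also have "\<dots> \<le> p * q * (2 + x powr \<beta> * x powr \<gamma>)"
      using pow_split[OF x0] p0 q0 by (intro mult_left_mono) simp_all
    also have "\<dots> = 2 * (p * q) + (x powr \<beta> * p) * (x powr \<gamma> * q)" by (simp add: algebra_simps)
    also have "\<dots> \<le> (p\<^sup>2 + q\<^sup>2) + ((x powr \<beta> * p)\<^sup>2 + (x powr \<gamma> * q)\<^sup>2)"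
    proof -
      have "2 * (p * q) \<le> p\<^sup>2 + q\<^sup>2" using sum_squares_bound[of p q] by simp
      moreover have "(x powr \<beta> * p) * (x powr \<gamma> * q) \<le> (x powr \<beta> * p)\<^sup>2 + (x powr \<gamma> * q)\<^sup>2"
      proof -
        have a: "2 * ((x powr \<beta> * p) * (x powr \<gamma> * q)) \<le> (x powr \<beta> * p)\<^sup>2 + (x powr \<gamma> * q)\<^sup>2"
          using sum_squares_bound[of "x powr \<beta> * p" "x powr \<gamma> * q"] by simp
        have "0 \<le> (x powr \<beta> * p) * (x powr \<gamma> * q)" using p0 q0 by simp
        then show ?thesis using a by linarith
      qed
      ultimately show ?thesis by linarith
    qed
    also have "\<dots> = B n"
    proof -
      have e1: "(x powr \<beta>)\<^sup>2 = x powr (2 * \<beta>)"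
      proof -
        have "(x powr \<beta>)\<^sup>2 = x powr (\<beta> + \<beta>)" by (simp only: power2_eq_square powr_add)
        also have "\<beta> + \<beta> = 2 * \<beta>" by simp
        finally show ?thesis .
      qed
      have e2: "(x powr \<gamma>)\<^sup>2 = x powr (2 * \<gamma>)"
      proof -
        have "(x powr \<gamma>)\<^sup>2 = x powr (\<gamma> + \<gamma>)" by (simp only: power2_eq_square powr_add)
        also have "\<gamma> + \<gamma> = 2 * \<gamma>" by simp
        finally show ?thesis .
      qed
      show ?thesis unfolding B_def x_def[symmetric] p_def[symmetric] q_def[symmetric]
        by (simp only: power_mult_distrib e1 e2)
    qed
    finally show "norm (W n) \<le> B n" unfolding W_def by simp
  qed
qed

lemma W_nonneg: "0 \<le> W n" unfolding W_def by simp

lemma bf_le_W: "cmod (bn n) * cmod (fn n) \<le> W n"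
proof -
  have "cmod (bn n) * cmod (fn n) * 1 \<le> cmod (bn n) * cmod (fn n) * (1 + cmod (lam n) powr \<alpha>)"
    by (intro mult_left_mono) simp_all
  then show ?thesis unfolding W_def by simp
qed

lemma geom:
  assumes z: "0 \<le> Re z" and n: "n \<notin> EE"
  shows "z \<noteq> lam n" "1 / cmod (z - lam n) \<le> 1 / \<omega> + cmod (lam n) powr \<alpha> / \<Upsilon>"
proof -
  have "Re (lam n) \<le> - \<omega> \<or> lam n \<in> Omega \<alpha> \<Upsilon>" using n unfolding EE_def by auto
  then have "z \<noteq> lam n \<and> 1 / cmod (z - lam n) \<le> 1 / \<omega> + cmod (lam n) powr \<alpha> / \<Upsilon>"
  proof
    assume R: "Re (lam n) \<le> - \<omega>"
    have "\<omega> \<le> Re (z - lam n)" using R z by simp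
    also have "\<dots> \<le> cmod (z - lam n)" by (rule complex_Re_le_cmod)
    finally have d: "\<omega> \<le> cmod (z - lam n)" .
    then have "1 / cmod (z - lam n) \<le> 1 / \<omega>" using om by (intro div_anti) auto
    moreover have "0 \<le> cmod (lam n) powr \<alpha> / \<Upsilon>" using Ups by simp
    ultimately show ?thesis using d om by auto
  next
    assume O: "lam n \<in> Omega \<alpha> \<Upsilon>"
    then have I: "Im (lam n) \<noteq> 0" and R: "Re (lam n) \<le> - \<Upsilon> / (\<bar>Im (lam n)\<bar> powr \<alpha>)"
      unfolding Omega_def by auto
    have ip: "\<bar>Im (lam n)\<bar> powr \<alpha> > 0" using I by simp
    have "\<Upsilon> / (\<bar>Im (lam n)\<bar> powr \<alpha>) \<le> Re (z - lam n)" using R z by simp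
    also have "\<dots> \<le> cmod (z - lam n)" by (rule complex_Re_le_cmod)
    finally have d: "\<Upsilon> / (\<bar>Im (lam n)\<bar> powr \<alpha>) \<le> cmod (z - lam n)" .
    have dp: "0 < \<Upsilon> / (\<bar>Im (lam n)\<bar> powr \<alpha>)" using Ups ip by simp
    have "1 / cmod (z - lam n) \<le> 1 / (\<Upsilon> / (\<bar>Im (lam n)\<bar> powr \<alpha>))"
      using d dp by (intro div_anti) auto
    also have "\<dots> = \<bar>Im (lam n)\<bar> powr \<alpha> / \<Upsilon>" by simp
    also have "\<dots> \<le> cmod (lam n) powr \<alpha> / \<Upsilon>"
      using Ups alpha_pos abs_Im_le_cmod[of "lam n"] by (intro divide_right_mono powr_mono2) auto
    finally have "1 / cmod (z - lam n) \<le> cmod (lam n) powr \<alpha> / \<Upsilon>" .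
    moreover have "0 < 1 / \<omega>" using om by simp
    ultimately have "1 / cmod (z - lam n) \<le> 1 / \<omega> + cmod (lam n) powr \<alpha> / \<Upsilon>" by linarith
    moreover have "z \<noteq> lam n" using d dp by auto
    ultimately show ?thesis by simp
  qed
  then show "z \<noteq> lam n" "1 / cmod (z - lam n) \<le> 1 / \<omega> + cmod (lam n) powr \<alpha> / \<Upsilon>" by auto
qed

definition "K1 = 1 / \<omega> + 1 / \<Upsilon> + 1"

lemma K1_pos: "K1 > 0" unfolding K1_def using om Ups by (simp add: add_pos_pos)

lemma term_bound:
  assumes z: "0 \<le> Re z" and n: "n \<notin> EE \<or> cmod (lam n) + 1 \<le> cmod z"
  shows "cmod (bn n / (z - lam n) * fn n) \<le> K1 * W n"
proof -
  have inv: "1 / cmod (z - lam n) \<le> K1 * (1 + cmod (lam n) powr \<alpha>)"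
  proof (cases "n \<in> EE")
    case False
    then have "1 / cmod (z - lam n) \<le> 1 / \<omega> + cmod (lam n) powr \<alpha> / \<Upsilon>" by (rule geom[OF z])
    also have "\<dots> \<le> K1 * (1 + cmod (lam n) powr \<alpha>)"
      unfolding K1_def using om Ups by (simp add: algebra_simps add_increasing add_nonneg_nonneg)
    finally show ?thesis .
  next
    case True
    then have "cmod (lam n) + 1 \<le> cmod z" using n by simp
    moreover have "cmod z \<le> cmod (lam n) + cmod (z - lam n)"
      by (metis norm_triangle_sub add.commute)
    ultimately have "1 \<le> cmod (z - lam n)" by simp
    then have "1 / cmod (z - lam n) \<le> 1 / 1" by (intro div_anti) auto
    then have "1 / cmod (z - lam n) \<le> 1" by simp
    also have "1 \<le> K1 * (1 + cmod (lam n) powr \<alpha>)"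
    proof -
      have "1 \<le> K1" unfolding K1_def using om Ups by simp
      moreover have "1 \<le> 1 + cmod (lam n) powr \<alpha>" by simp
      ultimately show ?thesis by (metis mult_mono' mult_1 zero_le_one)
    qed
    finally show ?thesis .
  qed
  have "cmod (bn n / (z - lam n) * fn n) = (cmod (bn n) * cmod (fn n)) * (1 / cmod (z - lam n))"
    by (simp add: norm_mult norm_divide)
  also have "\<dots> \<le> (cmod (bn n) * cmod (fn n)) * (K1 * (1 + cmod (lam n) powr \<alpha>))"
    by (intro mult_left_mono inv) simp
  also have "\<dots> = K1 * W n" unfolding W_def by simp
  finally show ?thesis .
qed

lemma isolation:
  assumes z: "0 \<le> Re z"
  shows "\<exists>r>0. \<forall>n. lam n \<noteq> z \<longrightarrow> r \<le> cmod (z - lam n)"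
proof -
  define B where "B = 1 / \<omega> + (cmod z + 1) powr \<alpha> / \<Upsilon>"
  have Bp: "B > 0" unfolding B_def using om Ups by (simp add: add_pos_nonneg)
  define F where "F = (\<lambda>n. cmod (z - lam n)) ` {n \<in> EE. lam n \<noteq> z}"
  have "{n \<in> EE. lam n \<noteq> z} \<subseteq> EE" by blast
  then have "finite {n \<in> EE. lam n \<noteq> z}" using finE unfolding EE_def by (rule finite_subset)
  then have fF: "finite F" unfolding F_def by (rule finite_imageI)
  define r where "r = Min (insert (min 1 (1 / B)) F)"
  have rpos: "r > 0" unfolding r_def using fF Bp by (auto simp: F_def)
  have "r \<le> cmod (z - lam n)" if ne: "lam n \<noteq> z" for n
  proof (cases "n \<in> EE")
    case True
    then have "cmod (z - lam n) \<in> F" unfolding F_def using ne by auto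
    then show ?thesis unfolding r_def using fF by simp
  next
    case False
    have rm: "r \<le> min 1 (1 / B)" unfolding r_def using fF by (intro Min_le) simp_all
    show ?thesis
    proof (cases "cmod (z - lam n) < 1")
      case False then show ?thesis using rm by simp
    next
      case True
      have zn: "z \<noteq> lam n" using ne by auto
      have "cmod (lam n) \<le> cmod z + cmod (z - lam n)" by (metis norm_minus_commute norm_triangle_sub add.commute)
      then have l: "cmod (lam n) \<le> cmod z + 1" using True by simp
      have "1 / cmod (z - lam n) \<le> 1 / \<omega> + cmod (lam n) powr \<alpha> / \<Upsilon>" by (rule geom(2)[OF z False])
      also have "\<dots> \<le> B" unfolding B_def using l alpha_pos Ups
        by (intro add_left_mono divide_right_mono powr_mono2) auto
      finally have "1 / cmod (z - lam n) \<le> B" .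
      then have "1 / B \<le> cmod (z - lam n)" using zn Bp by (simp add: field_simps)
      then show ?thesis using rm by simp
    qed
  qed
  then show ?thesis using rpos by blast
qed

end



context mctx begin

definition "tm n z = bn n / (z - lam n) * fn n"

lemma large_bound:
  "\<exists>R. \<forall>z. 0 \<le> Re z \<longrightarrow> R \<le> cmod z \<longrightarrow> cmod (\<Sum>n. tm n z) \<le> 1/2"
proof -
  have sW: "summable (\<lambda>n. K1 * W n)" by (intro summable_mult W_summable)
  obtain N where N: "\<forall>m\<ge>N. norm (\<Sum>i. K1 * W (i + m)) < 1/4"
    using suminf_exist_split[OF _ sW, of "1/4"] by auto
  define S0 where "S0 = (\<Sum>n<N. cmod (bn n) * cmod (fn n))"
  have S0: "S0 \<ge> 0" unfolding S0_def by (simp add: sum_nonneg)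
  define R where "R = (\<Sum>n<N. cmod (lam n)) + (\<Sum>n\<in>EE. cmod (lam n)) + 4 * S0 + 1"
  have fE: "finite EE" using finE unfolding EE_def .
  show ?thesis
  proof (intro exI allI impI)
    fix z assume z: "0 \<le> Re z" and zR: "R \<le> cmod z"
    have s1: "(\<Sum>n<N. cmod (lam n)) \<ge> 0" "(\<Sum>n\<in>EE. cmod (lam n)) \<ge> 0" by (simp_all add: sum_nonneg)
    have cond: "n \<notin> EE \<or> cmod (lam n) + 1 \<le> cmod z" for n
    proof (cases "n \<in> EE")
      case True
      then have "cmod (lam n) \<le> (\<Sum>n\<in>EE. cmod (lam n))"
        using fE by (intro member_le_sum) simp_all
      then show ?thesis using zR s1 S0 unfolding R_def by simp
    qed simp
    have tb: "cmod (tm n z) \<le> K1 * W n" for n unfolding tm_def by (rule term_bound[OF z cond])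
    have sn: "summable (\<lambda>n. norm (tm n z))"
      by (rule summable_comparison_test[OF _ sW]) (use tb in simp)
    have st: "summable (\<lambda>n. tm n z)" by (rule summable_norm_cancel[OF sn])
    have split: "(\<Sum>n. tm n z) = (\<Sum>n. tm (n + N) z) + (\<Sum>n<N. tm n z)"
      by (rule suminf_split_initial_segment[OF st])
    have snN: "summable (\<lambda>n. norm (tm (n + N) z))" using sn by (subst summable_iff_shift)
    have sWN: "summable (\<lambda>n. K1 * W (n + N))" using sW by (subst summable_iff_shift)
    have "cmod (\<Sum>n. tm (n + N) z) \<le> (\<Sum>n. norm (tm (n + N) z))" by (rule summable_norm[OF snN])
    also have "\<dots> \<le> (\<Sum>n. K1 * W (n + N))" by (rule suminf_le[OF _ snN sWN]) (use tb in simp)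
    also have "\<dots> \<le> 1/4" using N[rule_format, of N] by simp
    finally have t1: "cmod (\<Sum>n. tm (n + N) z) \<le> 1/4" .
    have fin: "cmod (tm n z) \<le> cmod (bn n) * cmod (fn n) / (4 * S0 + 1)" if n: "n < N" for n
    proof -
      have "cmod (lam n) \<le> (\<Sum>n<N. cmod (lam n))" using n by (intro member_le_sum) simp_all
      then have "4 * S0 + 1 \<le> cmod z - cmod (lam n)" using zR s1 unfolding R_def by simp
      also have "\<dots> \<le> cmod (z - lam n)" by (rule norm_triangle_ineq2)
      finally have d: "4 * S0 + 1 \<le> cmod (z - lam n)" .
      have "cmod (tm n z) = (cmod (bn n) * cmod (fn n)) / cmod (z - lam n)"
        unfolding tm_def by (simp add: norm_mult norm_divide)
      also have "\<dots> \<le> (cmod (bn n) * cmod (fn n)) / (4 * S0 + 1)"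
        using d S0 by (intro div_anti) simp_all
      finally show ?thesis .
    qed
    have "cmod (\<Sum>n<N. tm n z) \<le> (\<Sum>n<N. cmod (tm n z))" by (rule norm_sum)
    also have "\<dots> \<le> (\<Sum>n<N. cmod (bn n) * cmod (fn n) / (4 * S0 + 1))"
      by (rule sum_mono) (use fin in simp)
    also have "\<dots> = S0 / (4 * S0 + 1)" unfolding S0_def by (simp add: sum_divide_distrib)
    also have "\<dots> \<le> 1/4" using S0 by (simp add: field_simps)
    finally have t2: "cmod (\<Sum>n<N. tm n z) \<le> 1/4" .
    have "cmod (\<Sum>n. tm n z) \<le> cmod (\<Sum>n. tm (n + N) z) + cmod (\<Sum>n<N. tm n z)"
      unfolding split by (rule norm_triangle_ineq)
    then show "cmod (\<Sum>n. tm n z) \<le> 1/2" using t1 t2 by simp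
  qed
qed

definition "htr l w = (\<Sum>n. if lam n = l then 0 else tm n w)"

lemma near_bound:
  assumes r: "r > 0" "\<forall>n. lam n \<noteq> l \<longrightarrow> r \<le> cmod (l - lam n)"
    and w: "w \<in> ball l (r/2)"
  shows "cmod (if lam n = l then 0 else tm n w) \<le> (2 / r) * W n"
proof (cases "lam n = l")
  case True then show ?thesis using r W_nonneg[of n] by simp
next
  case False
  have "r \<le> cmod (l - lam n)" using r False by simp
  also have "\<dots> \<le> cmod (l - w) + cmod (w - lam n)" using norm_triangle_ineq[of "l - w" "w - lam n"] by simp
  finally have "r / 2 \<le> cmod (w - lam n)" using w by (simp add: dist_norm)
  then have d: "r / 2 \<le> cmod (w - lam n)" .
  have "cmod (tm n w) = (cmod (bn n) * cmod (fn n)) / cmod (w - lam n)"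
    unfolding tm_def by (simp add: norm_mult norm_divide)
  also have "\<dots> \<le> (cmod (bn n) * cmod (fn n)) / (r / 2)" using d r by (intro div_anti) simp_all
  also have "\<dots> \<le> W n / (r / 2)" using r by (intro divide_right_mono bf_le_W) simp
  also have "\<dots> = (2 / r) * W n" by simp
  finally show ?thesis using False by simp
qed

lemma htr_cont:
  assumes r: "r > 0" "\<forall>n. lam n \<noteq> l \<longrightarrow> r \<le> cmod (l - lam n)"
  shows "continuous_on (ball l (r/2)) (htr l)"
proof -
  have ul: "uniform_limit (ball l (r/2)) (\<lambda>N w. \<Sum>i<N. if lam i = l then 0 else tm i w)
        (\<lambda>w. suminf (\<lambda>i. if lam i = l then 0 else tm i w)) sequentially"
    by (rule Weierstrass_m_test[where M = "\<lambda>n. (2 / r) * W n"])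
       (use near_bound[OF r] in \<open>auto intro: summable_mult W_summable\<close>)
  have c: "continuous_on (ball l (r/2)) (\<lambda>w. \<Sum>i<N. if lam i = l then 0 else tm i w)" for N
  proof (intro continuous_on_sum)
    fix i assume "i \<in> {..<N}"
    show "continuous_on (ball l (r/2)) (\<lambda>w. if lam i = l then 0 else tm i w)"
    proof (cases "lam i = l")
      case True then show ?thesis by simp
    next
      case False
      have "w - lam i \<noteq> 0" if "w \<in> ball l (r/2)" for w
        using near_bound[OF r that, of i] False
      proof -
        have "r \<le> cmod (l - lam i)" using r False by simp
        also have "\<dots> \<le> cmod (l - w) + cmod (w - lam i)" using norm_triangle_ineq[of "l - w" "w - lam i"] by simp
        finally show ?thesis using that r by (auto simp: dist_norm)
      qed
      then show ?thesis using False unfolding tm_def by (auto intro!: continuous_intros)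
    qed
  qed
  show ?thesis unfolding htr_def[abs_def]
    by (rule uniform_limit_theorem[OF _ ul]) (use c in auto)
qed

lemma htr_summable:
  assumes r: "r > 0" "\<forall>n. lam n \<noteq> l \<longrightarrow> r \<le> cmod (l - lam n)"
    and w: "w \<in> ball l (r/2)"
  shows "summable (\<lambda>n. if lam n = l then 0 else tm n w)"
  by (rule summable_norm_cancel, rule summable_comparison_test[OF _ summable_mult[OF W_summable, of "2/r"]])
     (use near_bound[OF r w] in simp)

lemma full_summable:
  assumes d: "\<delta> > 0" "\<And>n. \<delta> \<le> cmod (z - lam n)"
  shows "summable (\<lambda>n. tm n z)"
proof (rule summable_norm_cancel, rule summable_comparison_test[OF _ summable_mult[OF W_summable, of "1/\<delta>"]])
  show "\<exists>N. \<forall>n\<ge>N. norm (norm (tm n z)) \<le> 1 / \<delta> * W n"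
  proof (intro exI allI impI)
    fix n
    have "cmod (tm n z) = (cmod (bn n) * cmod (fn n)) / cmod (z - lam n)"
      unfolding tm_def by (simp add: norm_mult norm_divide)
    also have "\<dots> \<le> (cmod (bn n) * cmod (fn n)) / \<delta>" using d by (intro div_anti) simp_all
    also have "\<dots> \<le> W n / \<delta>" using d by (intro divide_right_mono bf_le_W) simp
    finally show "norm (norm (tm n z)) \<le> 1 / \<delta> * W n" by simp
  qed
qed

end



context mctx begin

lemma g_formula: "z \<in> resolvent_set sc DA AA \<Longrightarrow> ip (resolvent sc DA AA z b) f = (\<Sum>n. tm n z)"
  unfolding tm_def bn_def fn_def by (rule res_formula)

lemma final:
  assumes noeig: "\<And>z x. 0 \<le> Re z \<Longrightarrow> x \<in> DA \<Longrightarrow> sc z x - (AA x + sc (ip x f) b) = 0 \<Longrightarrow> x = 0"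
  shows "\<exists>\<epsilon>>0. \<forall>z \<in> resolvent_set sc DA AA. 0 \<le> Re z \<longrightarrow>
           \<epsilon> < cmod (1 - ip (resolvent sc DA AA z b) f)"
proof (rule ccontr)
  assume H: "\<not> ?thesis"
  define g where "g z = 1 - (\<Sum>n. tm n z)" for z
  have Hk: "\<exists>z. z \<in> resolvent_set sc DA AA \<and> 0 \<le> Re z \<and> cmod (g z) \<le> 1 / (real k + 3)" for k :: nat
  proof -
    have "1 / (real k + 3) > 0" by simp
    then obtain z where "z \<in> resolvent_set sc DA AA" "0 \<le> Re z"
      "\<not> 1 / (real k + 3) < cmod (1 - ip (resolvent sc DA AA z b) f)"
      using H by blast
    then show ?thesis unfolding g_def using g_formula by (intro exI[of _ z]) auto
  qed
  then obtain zs where zs: "\<And>k. zs k \<in> resolvent_set sc DA AA" "\<And>k. 0 \<le> Re (zs k)"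
    "\<And>k. cmod (g (zs k)) \<le> 1 / (real k + 3)"
    by metis
  obtain R where R: "\<And>z. 0 \<le> Re z \<Longrightarrow> R \<le> cmod z \<Longrightarrow> cmod (\<Sum>n. tm n z) \<le> 1/2"
    using large_bound by blast
  have zsR: "cmod (zs k) \<le> R" for k
  proof (rule ccontr)
    assume "\<not> cmod (zs k) \<le> R"
    then have "cmod (\<Sum>n. tm n (zs k)) \<le> 1/2" using R zs(2) by simp
    then have "1/2 \<le> cmod (g (zs k))" unfolding g_def
      using norm_triangle_ineq2[of 1 "\<Sum>n. tm n (zs k)"] by simp
    moreover have "1 / (real k + 3) < 1/2" by (simp add: field_simps)
    ultimately show False using zs(3)[of k] by simp
  qed
  have "bounded (range zs)" unfolding bounded_iff using zsR by blast
  then obtain l \<sigma> where sm: "strict_mono \<sigma>" and lim: "(zs \<circ> \<sigma>) \<longlonglongrightarrow> l"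
    using bounded_imp_convergent_subsequence by blast
  define w where "w j = zs (\<sigma> j)" for j
  have wl: "w \<longlonglongrightarrow> l" using lim unfolding w_def comp_def .
  have wres: "w j \<in> resolvent_set sc DA AA" and wre: "0 \<le> Re (w j)" for j
    unfolding w_def using zs by auto
  have g0: "(\<lambda>j. g (w j)) \<longlonglongrightarrow> 0"
  proof (rule Lim_null_comparison)
    show "\<forall>\<^sub>F j in sequentially. norm (g (w j)) \<le> 1 / (real j + 3)"
    proof (intro always_eventually allI)
      fix j
      have "real j \<le> real (\<sigma> j)" using seq_suble[OF sm, of j] by simp
      then have "1 / (real (\<sigma> j) + 3) \<le> 1 / (real j + 3)" by (intro div_anti) simp_all
      then show "norm (g (w j)) \<le> 1 / (real j + 3)" unfolding w_def using zs(3)[of "\<sigma> j"] by simp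
    qed
    have "(\<lambda>j. 1 / (real j + 3)) = (\<lambda>j. 1 / real (j + 3))" by simp
    moreover have "(\<lambda>j. 1 / real (j + 3)) \<longlonglongrightarrow> 0"
      using LIMSEQ_ignore_initial_segment[OF lim_const_over_n[of "1::real"], of 3] by simp
    ultimately show "(\<lambda>j. 1 / (real j + 3)) \<longlonglongrightarrow> 0" by simp
  qed
  have lre: "0 \<le> Re l"
    by (rule LIMSEQ_le_const[OF tendsto_Re[OF wl]]) (use wre in auto)
  obtain r where r: "r > 0" "\<forall>n. lam n \<noteq> l \<longrightarrow> r \<le> cmod (l - lam n)"
    using isolation[OF lre] by blast
  have lball: "l \<in> ball l (r/2)" using r by simp
  have hc: "isCont (htr l) l"
    using htr_cont[OF r] lball continuous_on_eq_continuous_at[of "ball l (r/2)" "htr l"] by auto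
  have hlim: "(\<lambda>j. htr l (w j)) \<longlonglongrightarrow> htr l l"
    using isCont_tendsto_compose[OF hc wl] .
  have evb: "\<forall>\<^sub>F j in sequentially. w j \<in> ball l (r/2)"
  proof -
    have "r/2 > 0" using r(1) by simp
    then have "\<forall>\<^sub>F j in sequentially. dist (w j) l < r/2" using wl unfolding tendsto_iff by blast
    then show ?thesis by eventually_elim (simp add: dist_commute)
  qed
  show False
  proof (cases "\<forall>n. lam n = l \<longrightarrow> bn n = 0")
    case True
    have eq: "(\<Sum>n. tm n z) = htr l z" for z
      unfolding htr_def by (rule suminf_cong) (use True in \<open>simp add: tm_def\<close>)
    have "(\<lambda>j. g (w j)) \<longlonglongrightarrow> 1 - htr l l" unfolding g_def eq by (intro tendsto_intros hlim)
    then have "1 - htr l l = 0" using g0 by (rule LIMSEQ_unique)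
    then have h1: "htr l l = 1" by simp
    define c where "c n = (if lam n = l then 0 else bn n / (l - lam n))" for n
    define x where "x = (\<Sum>n. sc (c n) (phi n))"
    have J: "\<And>n. lam n = l \<Longrightarrow> ip b (psi n) = 0" using True unfolding bn_def by simp
    have d2: "\<And>n. lam n \<noteq> l \<Longrightarrow> r \<le> cmod (l - lam n)" using r by simp
    have cs: "x \<in> DA" "sc l x - AA x = b" "ip x f = (\<Sum>n. c n * ip (phi n) f)"
      using construct_sol[OF J r(1) d2] unfolding x_def c_def bn_def by auto
    have "ip x f = htr l l" unfolding cs(3) htr_def
      by (rule suminf_cong) (simp add: c_def tm_def fn_def)
    then have xf: "ip x f = 1" using h1 by simp
    have "sc l x - (AA x + sc (ip x f) b) = 0" using cs(2) xf by (simp add: algebra_simps)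
    then have "x = 0" using noeig[OF lre cs(1)] by simp
    then show False using xf by simp
  next
    case False
    then obtain j0 where j0: "lam j0 = l" "bn j0 \<noteq> 0" by blast
    have uniq: "lam n = l \<longleftrightarrow> n = j0" for n using inj_lam j0(1) by (auto dest: injD)
    show False
    proof (cases "fn j0 = 0")
      case True
      have "sc l (phi j0) - (AA (phi j0) + sc (ip (phi j0) f) b) = 0"
        using True j0(1) by (simp add: op_phi fn_def)
      then have "phi j0 = 0" using noeig[OF lre phi_dom] by simp
      then show False using phi_nz by simp
    next
      case False
      define c where "c = bn j0 * fn j0"
      have c0: "c \<noteq> 0" using False j0 unfolding c_def by simp
      have split: "(\<Sum>n. tm n (w j)) = htr l (w j) + tm j0 (w j)" if wb: "w j \<in> ball l (r/2)" for j
      proof -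
        obtain \<delta> where d: "\<delta> > 0" "\<And>n. \<delta> \<le> cmod (w j - lam n)" using res_gap[OF wres[of j]] by blast
        have s1: "summable (\<lambda>n. if lam n = l then 0 else tm n (w j))" by (rule htr_summable[OF r wb])
        have s2: "(\<lambda>n. if lam n = l then tm n (w j) else 0) sums tm j0 (w j)"
        proof -
          have "(\<lambda>n. if lam n = l then tm n (w j) else 0) = (\<lambda>n. if n = j0 then tm n (w j) else 0)"
            using uniq by auto
          then show ?thesis using sums_single[of j0 "\<lambda>n. tm n (w j)"] by simp
        qed
        have "(\<Sum>n. tm n (w j)) = (\<Sum>n. (if lam n = l then 0 else tm n (w j)) + (if lam n = l then tm n (w j) else 0))"
          by (rule suminf_cong) simp
        also have "\<dots> = htr l (w j) + tm j0 (w j)"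
          unfolding htr_def using suminf_add[OF s1 sums_summable[OF s2]] sums_unique[OF s2] by simp
        finally show ?thesis .
      qed
      have ev: "\<forall>\<^sub>F j in sequentially. tm j0 (w j) * (w j - l) = (1 - g (w j) - htr l (w j)) * (w j - l)"
        using evb by eventually_elim (use split in \<open>simp add: g_def\<close>)
      have "(\<lambda>j. (1 - g (w j) - htr l (w j)) * (w j - l)) \<longlonglongrightarrow> (1 - 0 - htr l l) * (l - l)"
        by (intro tendsto_intros g0 hlim wl)
      then have L2: "(\<lambda>j. (1 - g (w j) - htr l (w j)) * (w j - l)) \<longlonglongrightarrow> 0" by simp
      have L: "(\<lambda>j. tm j0 (w j) * (w j - l)) \<longlonglongrightarrow> 0"
        by (subst tendsto_cong[OF ev]) (rule L2)
      have "tm j0 (w j) * (w j - l) = c" for j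
      proof -
        obtain \<delta> where d: "\<delta> > 0" "\<And>n. \<delta> \<le> cmod (w j - lam n)" using res_gap[OF wres[of j]] by blast
        have "w j - l \<noteq> 0" using d(1) d(2)[of j0] j0(1) by auto
        then show ?thesis unfolding tm_def c_def using j0(1) by (simp add: field_simps)
      qed
      then have "(\<lambda>j. c) \<longlonglongrightarrow> 0" using L by simp
      then have "c = 0" using LIMSEQ_const_iff by blast
      then show False using c0 by simp
    qed
  qed
qed

end


theorem mainTheorem8:
  fixes sc :: "complex \<Rightarrow> 'a::banach \<Rightarrow> 'a"
    and ip :: "'a \<Rightarrow> 'a \<Rightarrow> complex"
    and lam :: "nat \<Rightarrow> complex" and phi psi :: "nat \<Rightarrow> 'a"
    and b f :: 'a and \<alpha> :: real
  assumes H: "complex_hilbert sc ip"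
    and RS: "riesz_spectral_data sc ip lam phi psi"
    and alpha_pos: "0 < \<alpha>"
    and A1: "\<exists>\<omega> \<Upsilon>. 0 < \<omega> \<and> 0 < \<Upsilon> \<and>
               finite {n. - \<omega> < Re (lam n) \<and> lam n \<notin> Omega \<alpha> \<Upsilon>}"
    and A3: "\<exists>T. generates sc (rs_dom ip lam psi)
                   (\<lambda>x. rs_op sc ip lam phi psi x + sc (ip x f) b) T
               \<and> poly_stable sc \<alpha> T"
    and A4: "\<exists>\<beta> \<gamma>. 0 \<le> \<beta> \<and> 0 \<le> \<gamma> \<and> b \<in> Dpow ip lam psi \<beta> \<and> f \<in> Dpow ip lam phi \<gamma> \<and>
               ((\<beta> \<in> \<nat> \<and> \<gamma> \<in> \<nat> \<and> \<alpha> \<le> \<beta> + \<gamma>) \<or> \<alpha> < \<beta> + \<gamma>)"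
  shows "\<exists>\<epsilon>>0. \<forall>z \<in> resolvent_set sc (rs_dom ip lam psi) (rs_op sc ip lam phi psi).
           0 \<le> Re z \<longrightarrow>
           \<epsilon> < cmod (1 - ip (resolvent sc (rs_dom ip lam psi) (rs_op sc ip lam phi psi) z b) f)"
proof -
  interpret chs sc ip by unfold_locales (rule H)
  interpret rsd sc ip lam phi psi by unfold_locales (rule RS)
  obtain \<omega> \<Upsilon> where om: "0 < \<omega>" and Ups: "0 < \<Upsilon>"
    and fE: "finite {n. - \<omega> < Re (lam n) \<and> lam n \<notin> Omega \<alpha> \<Upsilon>}"
    using A1 by blast
  obtain \<beta> \<gamma> where bg: "0 \<le> \<beta>" "0 \<le> \<gamma>" "b \<in> Dpow ip lam psi \<beta>" "f \<in> Dpow ip lam phi \<gamma>"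
    and or: "(\<beta> \<in> \<nat> \<and> \<gamma> \<in> \<nat> \<and> \<alpha> \<le> \<beta> + \<gamma>) \<or> \<alpha> < \<beta> + \<gamma>"
    using A4 by blast
  have abg: "\<alpha> \<le> \<beta> + \<gamma>" using or by auto
  interpret mctx sc ip lam phi psi b f \<alpha> \<omega> \<Upsilon> \<beta> \<gamma>
    by unfold_locales (use alpha_pos om Ups fE bg abg in auto)
  obtain T where gen: "generates sc (rs_dom ip lam psi)
                   (\<lambda>x. rs_op sc ip lam phi psi x + sc (ip x f) b) T" and ps: "poly_stable sc \<alpha> T"
    using A3 by blast
  show ?thesis
  proof (rule final)
    fix z x assume "0 \<le> Re z" "x \<in> rs_dom ip lam psi"
      "sc z x - (rs_op sc ip lam phi psi x + sc (ip x f) b) = 0"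
    then show "x = 0" using no_eigen[OF gen ps] by blast
  qed
qed

end
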